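(* Let $s > \frac12$, $T>0$, and let $v \in C([0,T];H^s(\mathbb T))$ be a solution of \[\partial_t \hat{v}(n) - ip(n) \hat{v}(n) = -\frac{\mu i}{(2\pi)^2} n\big(|\hat{v}(n)|^2 - |\hat{v}_0(n)|^2\big) \hat{v}(n) + \frac{\mu i}{3(2\pi)^2}n \sum_{\mathcal N_n} \hat{v}(n_1)\hat{v}(n_2)\hat{v}(n_3),\qquad n\in\mathbb Z,\] with $v(0)=v_0$. Then \[\Big\|\mathcal F_x^{-1}\big(n(|\hat{v}(n)|^2 - |\hat{v}_0(n)|^2) \hat{v}(n)\big)\Big\|_{L_T^{\infty}H^{-s}} \lesssim \|v\|_{L_T^{\infty}H^s}^3\] and \[\Big\|\mathcal F_x^{-1}\Big(n \sum_{\mathcal N_n} \hat{v}(n_1)\hat{v}(n_2)\hat{v}(n_3)\Big)\Big\|_{L_T^{\infty}H^{-s}} \lesssim \|v\|_{L_T^{\infty}H^s}^3.\]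
   Context: $\mathbb T=\mathbb R/2\pi\mathbb Z$; $\beta\ge0$, $\gamma\in\mathbb R$, $\mu=\pm1$; $v$ is real-valued and $\hat v(n)$ denotes its spatial Fourier coefficient at $n\in\mathbb Z$. $p(n)=n^5+\beta n^3-(\gamma+\frac{\mu}{2\pi}\|v_0\|_{L^2}^2)n-\frac{\mu n}{(2\pi)^2}|\hat v_0(n)|^2$, and $\mathcal N_n=\{(n_1,n_2,n_3)\in\mathbb Z^3: n_1+n_2+n_3=n,\ (n_1+n_2)(n_2+n_3)(n_3+n_1)\ne0\}$. $L^\infty_TH^{\sigma}$ denotes $L^\infty([0,T];H^\sigma(\mathbb T))$. $A\lesssim B$ means $A\le CB$ for a constant $C>0$. *)

theory Defs
  imports "HOL-Analysis.Analysis"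
begin

text \<open>Functions on the torus are represented by their Fourier coefficients
  \<open>f :: int \<Rightarrow> complex\<close>, with the convention
  \<open>f(n) = \<integral>_T v(x) e^{-inx} dx\<close>.\<close>

definition hs_weight :: "real \<Rightarrow> int \<Rightarrow> real" where
  "hs_weight s n = (1 + (real_of_int n)\<^sup>2) powr s"

definition in_Hs :: "real \<Rightarrow> (int \<Rightarrow> complex) \<Rightarrow> bool" where
  "in_Hs s f \<longleftrightarrow> (\<lambda>n. hs_weight s n * (cmod (f n))\<^sup>2) summable_on UNIV"

definition hs_norm :: "real \<Rightarrow> (int \<Rightarrow> complex) \<Rightarrow> real" where
  "hs_norm s f = sqrt (\<Sum>\<^sub>\<infinity>n\<in>UNIV. hs_weight s n * (cmod (f n))\<^sup>2)"

text \<open>Squared \<open>L^2\<close> norm via Parseval: \<open>\<parallel>v\<parallel>^2 = (2\<pi>)^{-1} \<Sum> |f(n)|^2\<close>.\<close>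
definition l2_norm_sq :: "(int \<Rightarrow> complex) \<Rightarrow> real" where
  "l2_norm_sq f = (\<Sum>\<^sub>\<infinity>n\<in>UNIV. (cmod (f n))\<^sup>2) / (2 * pi)"

definition real_valued_coeffs :: "(int \<Rightarrow> complex) \<Rightarrow> bool" where
  "real_valued_coeffs f \<longleftrightarrow> (\<forall>n. f (-n) = cnj (f n))"

definition resonant_set :: "int \<Rightarrow> (int \<times> int \<times> int) set" where
  "resonant_set n = {(n1, n2, n3). n1 + n2 + n3 = n \<and> (n1 + n2) * (n2 + n3) * (n3 + n1) \<noteq> 0}"

definition trilin :: "(int \<Rightarrow> complex) \<Rightarrow> int \<Rightarrow> complex" where
  "trilin f n = (\<Sum>\<^sub>\<infinity>(n1, n2, n3)\<in>resonant_set n. f n1 * f n2 * f n3)"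

definition pfun :: "real \<Rightarrow> real \<Rightarrow> real \<Rightarrow> (int \<Rightarrow> complex) \<Rightarrow> int \<Rightarrow> real" where
  "pfun \<beta> \<gamma> \<mu> f0 n =
     (real_of_int n)^5 + \<beta> * (real_of_int n)^3
     - (\<gamma> + \<mu> / (2 * pi) * l2_norm_sq f0) * real_of_int n
     - \<mu> * real_of_int n / (2 * pi)\<^sup>2 * (cmod (f0 n))\<^sup>2"

definition cont_Hs :: "real \<Rightarrow> real \<Rightarrow> (real \<Rightarrow> int \<Rightarrow> complex) \<Rightarrow> bool" where
  "cont_Hs s T v \<longleftrightarrow> (\<forall>t\<in>{0..T}. in_Hs s (v t)) \<and>
     (\<forall>t0\<in>{0..T}. ((\<lambda>t. hs_norm s (\<lambda>n. v t n - v t0 n)) \<longlongrightarrow> 0) (at t0 within {0..T}))"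

definition solves_eq :: "real \<Rightarrow> real \<Rightarrow> real \<Rightarrow> real \<Rightarrow> (real \<Rightarrow> int \<Rightarrow> complex) \<Rightarrow> bool" where
  "solves_eq \<beta> \<gamma> \<mu> T v \<longleftrightarrow>
     (\<forall>n. \<forall>t\<in>{0..T}.
        ((\<lambda>\<tau>. v \<tau> n) has_vector_derivative
          (\<i> * complex_of_real (pfun \<beta> \<gamma> \<mu> (v 0) n) * v t n
           - complex_of_real \<mu> * \<i> / (2 * pi)\<^sup>2 * of_int n
               * complex_of_real ((cmod (v t n))\<^sup>2 - (cmod (v 0 n))\<^sup>2) * v t n
           + complex_of_real \<mu> * \<i> / (3 * (2 * pi)\<^sup>2) * of_int n * trilin (v t) n))
        (at t within {0..T}))"

end

theory Submission
  imports Defs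
begin


lemma wsum_summable:
  fixes s :: real assumes s: "s > 1/2"
  shows "(\<lambda>n::int. (1 + (real_of_int n)\<^sup>2) powr (-s)) summable_on UNIV"
proof -
  define h where "h = (\<lambda>k::nat. (1 + (real k)\<^sup>2) powr (-s))"
  have "summable (\<lambda>k. real k powr (-(2 * s)))" using s by (subst summable_real_powr_iff) auto
  hence s1: "summable (\<lambda>k. real (Suc k) powr (-(2 * s)))" by (subst summable_Suc_iff)
  have le: "h k \<le> 2 powr s * real (Suc k) powr (-(2 * s))" for k
  proof -
    have "0 \<le> (real k - 1)\<^sup>2" by simp
    hence "(real (Suc k))\<^sup>2 / 2 \<le> 1 + (real k)\<^sup>2" by (simp add: power2_eq_square algebra_simps)
    hence "h k \<le> ((real (Suc k))\<^sup>2 / 2) powr (-s)" unfolding h_def using s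
      by (intro powr_mono2') auto
    also have "\<dots> = 2 powr s * real (Suc k) powr (-(2 * s))"
      by (simp add: powr_divide powr_minus_divide powr_powr[symmetric] divide_simps powr_realpow[symmetric] power2_eq_square powr_mult)
    finally show ?thesis .
  qed
  have "summable h"
    by (rule summable_comparison_test[OF _ summable_mult[OF s1, of "2 powr s"]])
       (use le in \<open>auto simp: h_def\<close>)
  hence hs: "h summable_on UNIV" by (rule summable_nonneg_imp_summable_on) (simp add: h_def)
  let ?f = "\<lambda>n::int. (1 + (real_of_int n)\<^sup>2) powr (-s)"
  have "?f summable_on range int"
    by (subst summable_on_reindex) (use hs in \<open>auto simp: inj_on_def h_def o_def\<close>)
  moreover have "?f summable_on range (\<lambda>k. - int k)"
    by (subst summable_on_reindex) (use hs in \<open>auto simp: inj_on_def h_def o_def\<close>)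
  ultimately have "?f summable_on (range int \<union> range (\<lambda>k. - int k))"
    by (rule summable_on_union)
  also have "range int \<union> range (\<lambda>k. - int k) = UNIV"
  proof -
    have "x \<in> range int \<union> range (\<lambda>k. - int k)" for x :: int
    proof (cases "x \<ge> 0")
      case True hence "x = int (nat x)" by simp
      thus ?thesis by blast
    next
      case False hence "x = - int (nat (-x))" by simp
      thus ?thesis by blast
    qed
    thus ?thesis by blast
  qed
  finally show ?thesis .
qed



lemma amgm:
  fixes l x y :: real assumes "l > 0"
  shows "x * y \<le> (l * x\<^sup>2 + y\<^sup>2 / l) / 2"
proof -
  have "0 \<le> (l * x - y)\<^sup>2 / l" using assms by simp
  also have "(l * x - y)\<^sup>2 / l = l * x\<^sup>2 - 2 * x * y + y\<^sup>2 / l"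
    using assms by (simp add: power2_eq_square field_simps)
  finally show ?thesis by simp
qed

lemma le_infsum_single:
  fixes f :: "'a \<Rightarrow> real"
  assumes "f summable_on UNIV" "\<And>x. f x \<ge> 0"
  shows "f x \<le> infsum f UNIV"
  using finite_sum_le_infsum[OF assms(1), of "{x}"] assms(2) by simp

lemma prod_summable:
  fixes f g :: "'a \<Rightarrow> real"
  assumes f0: "\<And>i. f i \<ge> 0" and g0: "\<And>i. g i \<ge> 0"
    and fs: "f summable_on UNIV" and gs: "g summable_on UNIV"
  shows "(\<lambda>(i,j). f i * g j) summable_on UNIV"
    and "infsum (\<lambda>(i,j). f i * g j) UNIV = infsum f UNIV * infsum g UNIV"
proof -
  have hs: "((\<lambda>j. f i * g j) has_sum (f i * infsum g UNIV)) UNIV" for i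
    by (rule has_sum_cmult_right) (use gs in \<open>simp add: has_sum_infsum\<close>)
  have "(\<lambda>p. f (fst p) * g (snd p)) summable_on Sigma UNIV (\<lambda>_. UNIV)"
    by (rule summable_on_SigmaI[where g = "\<lambda>i. f i * infsum g UNIV"])
       (use hs fs f0 g0 in \<open>auto intro: summable_on_cmult_left\<close>)
  thus S: "(\<lambda>(i,j). f i * g j) summable_on UNIV"
    by (simp add: case_prod_unfold)
  have "infsum (\<lambda>(i,j). f i * g j) UNIV = infsum (\<lambda>i. infsum (\<lambda>j. f i * g j) UNIV) UNIV"
    using infsum_Sigma'_banach[of "\<lambda>i j. f i * g j" UNIV "\<lambda>_. UNIV"] S by simp
  also have "\<dots> = infsum (\<lambda>i. f i * infsum g UNIV) UNIV"
    by (simp add: infsum_cmult_right gs)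
  also have "\<dots> = infsum f UNIV * infsum g UNIV"
    by (simp add: infsum_cmult_left fs)
  finally show "infsum (\<lambda>(i,j). f i * g j) UNIV = infsum f UNIV * infsum g UNIV" .
qed

lemma infsum_finsum:
  fixes \<phi> :: "'b \<Rightarrow> 'a \<Rightarrow> real"
  assumes "finite F" "\<And>n. n \<in> F \<Longrightarrow> \<phi> n summable_on A"
  shows "(\<lambda>x. \<Sum>n\<in>F. \<phi> n x) summable_on A \<and> infsum (\<lambda>x. \<Sum>n\<in>F. \<phi> n x) A = (\<Sum>n\<in>F. infsum (\<phi> n) A)"
  using assms
proof (induction F rule: finite_induct)
  case empty then show ?case by simp
next
  case (insert a F)
  hence IH: "(\<lambda>x. \<Sum>n\<in>F. \<phi> n x) summable_on A" "infsum (\<lambda>x. \<Sum>n\<in>F. \<phi> n x) A = (\<Sum>n\<in>F. infsum (\<phi> n) A)"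
    by auto
  have a: "\<phi> a summable_on A" using insert by auto
  show ?case using insert(1,2) IH a
    by (simp add: summable_on_add infsum_add)
qed



lemma young:
  fixes f g h :: "int \<Rightarrow> real"
  assumes f0: "\<And>i. f i \<ge> 0" and g0: "\<And>i. g i \<ge> 0" and h0: "\<And>i. h i \<ge> 0"
    and fs: "f summable_on UNIV" and gs: "g summable_on UNIV"
    and hs: "(\<lambda>i. (h i)\<^sup>2) summable_on UNIV"
  shows "(\<lambda>n. (infsum (\<lambda>(i,j). f i * g j * h (n-i-j)) UNIV)\<^sup>2) summable_on UNIV \<and>
         infsum (\<lambda>n. (infsum (\<lambda>(i,j). f i * g j * h (n-i-j)) UNIV)\<^sup>2) UNIV
           \<le> (infsum f UNIV * infsum g UNIV)\<^sup>2 * infsum (\<lambda>i. (h i)\<^sup>2) UNIV"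
proof -
  define R where "R = (\<lambda>n. infsum (\<lambda>(i,j). f i * g j * h (n-i-j)) UNIV)"
  define FG where "FG = infsum f UNIV * infsum g UNIV"
  define H2 where "H2 = infsum (\<lambda>i. (h i)\<^sup>2) UNIV"
  have FG0: "FG \<ge> 0" unfolding FG_def using f0 g0 by (simp add: infsum_nonneg)
  have H20: "H2 \<ge> 0" unfolding H2_def by (simp add: infsum_nonneg)
  have hb: "h i \<le> sqrt H2" for i
  proof -
    have "(h i)\<^sup>2 \<le> H2" unfolding H2_def by (rule le_infsum_single[OF hs]) simp
    thus ?thesis using h0[of i] by (simp add: real_le_rsqrt)
  qed
  have P: "(\<lambda>(i,j). f i * g j) summable_on UNIV" and Pv: "infsum (\<lambda>(i,j). f i * g j) UNIV = FG"
    using prod_summable[OF f0 g0 fs gs] by (auto simp: FG_def)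
  have Pc: "(\<lambda>(i,j). f i * g j * c) summable_on UNIV" for c
    using summable_on_cmult_left[OF P, of c] by (simp add: case_prod_unfold)
  have Pcv: "infsum (\<lambda>(i,j). f i * g j * c) UNIV = FG * c" for c
    using infsum_cmult_left[of c "\<lambda>(i,j). f i * g j" UNIV] P Pv by (simp add: case_prod_unfold)
  have phis: "(\<lambda>(i,j). f i * g j * h (n-i-j)) summable_on UNIV" for n
    by (rule summable_on_comparison_test[OF Pc[of "sqrt H2"]])
       (auto intro!: mult_left_mono hb mult_nonneg_nonneg f0 g0 h0)
  have R0: "R n \<ge> 0" for n unfolding R_def
    by (rule infsum_nonneg) (auto intro!: mult_nonneg_nonneg f0 g0 h0)
  have hsh: "(\<Sum>n\<in>F. (h (n - c))\<^sup>2) \<le> H2" if "finite F" for F and c :: int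
  proof -
    have "(\<Sum>n\<in>F. (h (n - c))\<^sup>2) = (\<Sum>m\<in>(\<lambda>n. n - c) ` F. (h m)\<^sup>2)"
      by (subst sum.reindex) (auto simp: inj_on_def)
    also have "\<dots> \<le> H2" unfolding H2_def
      by (rule finite_sum_le_infsum[OF hs]) (use that in auto)
    finally show ?thesis .
  qed
  have main: "(\<Sum>n\<in>F. (R n)\<^sup>2) \<le> FG\<^sup>2 * H2" if F: "finite F" for F
  proof -
    define Q where "Q = (\<Sum>n\<in>F. (R n)\<^sup>2)"
    have Q0: "Q \<ge> 0" unfolding Q_def by (simp add: sum_nonneg)
    have step: "Q \<le> FG * ((l * Q + H2 / l) / 2)" if l: "l > 0" for l
    proof -
      have "Q = (\<Sum>n\<in>F. R n * infsum (\<lambda>(i,j). f i * g j * h (n-i-j)) UNIV)"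
        unfolding Q_def by (simp add: R_def power2_eq_square)
      also have "\<dots> = (\<Sum>n\<in>F. infsum (\<lambda>(i,j). R n * (f i * g j * h (n-i-j))) UNIV)"
      proof (intro sum.cong refl)
        fix n show "R n * infsum (\<lambda>(i,j). f i * g j * h (n-i-j)) UNIV = infsum (\<lambda>(i,j). R n * (f i * g j * h (n-i-j))) UNIV"
          using infsum_cmult_right[OF phis[of n], of "R n"] by (simp add: case_prod_unfold)
      qed
      also have "\<dots> = infsum (\<lambda>p. \<Sum>n\<in>F. (\<lambda>(i,j). R n * (f i * g j * h (n-i-j))) p) UNIV"
        using infsum_finsum[OF F, of "\<lambda>n. (\<lambda>(i,j). R n * (f i * g j * h (n-i-j)))" UNIV]
          summable_on_cmult_right[OF phis] by (simp add: case_prod_unfold)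
      also have "\<dots> \<le> infsum (\<lambda>(i,j). f i * g j * ((l * Q + H2 / l) / 2)) UNIV"
      proof (rule infsum_mono)
        show "(\<lambda>p. \<Sum>n\<in>F. (\<lambda>(i,j). R n * (f i * g j * h (n-i-j))) p) summable_on UNIV"
          using infsum_finsum[OF F, of "\<lambda>n. (\<lambda>(i,j). R n * (f i * g j * h (n-i-j)))" UNIV]
            summable_on_cmult_right[OF phis] by (simp add: case_prod_unfold)
        show "(\<lambda>(i,j). f i * g j * ((l * Q + H2 / l) / 2)) summable_on UNIV" by (rule Pc)
        fix p :: "int \<times> int"
        obtain i j where p: "p = (i,j)" by (cases p)
        have "(\<Sum>n\<in>F. R n * (f i * g j * h (n-i-j))) = f i * g j * (\<Sum>n\<in>F. R n * h (n - (i+j)))"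
          by (simp add: sum_distrib_left algebra_simps)
        also have "\<dots> \<le> f i * g j * ((l * Q + H2 / l) / 2)"
        proof (rule mult_left_mono)
          have "(\<Sum>n\<in>F. R n * h (n - (i+j))) \<le> (\<Sum>n\<in>F. (l * (R n)\<^sup>2 + (h (n - (i+j)))\<^sup>2 / l) / 2)"
            by (rule sum_mono) (rule amgm[OF l])
          also have "\<dots> = (l * Q + (\<Sum>n\<in>F. (h (n - (i+j)))\<^sup>2) / l) / 2"
            unfolding Q_def by (simp add: sum_divide_distrib[symmetric] sum.distrib sum_distrib_left)
          also have "\<dots> \<le> (l * Q + H2 / l) / 2"
            using hsh[OF F, of "i+j"] l by (simp add: divide_right_mono)
          finally show "(\<Sum>n\<in>F. R n * h (n - (i+j))) \<le> (l * Q + H2 / l) / 2" .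
          show "0 \<le> f i * g j" using f0 g0 by simp
        qed
        finally show "(\<Sum>n\<in>F. (\<lambda>(i,j). R n * (f i * g j * h (n-i-j))) p)
            \<le> (\<lambda>(i,j). f i * g j * ((l * Q + H2 / l) / 2)) p" by (simp add: p)
      qed
      also have "\<dots> = FG * ((l * Q + H2 / l) / 2)" by (rule Pcv)
      finally show ?thesis .
    qed
    show ?thesis
    proof (cases "FG = 0")
      case True
      then show ?thesis using step[of 1] Q0 by (simp add: Q_def)
    next
      case False
      hence "FG > 0" using FG0 by simp
      hence "Q \<le> FG * ((Q / FG + H2 * FG) / 2)" using step[of "1/FG"] by simp
      also have "\<dots> = (Q + FG\<^sup>2 * H2) / 2" using \<open>FG > 0\<close> by (simp add: field_simps power2_eq_square)
      finally show ?thesis unfolding Q_def by simp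
    qed
  qed
  have S: "(\<lambda>n. (R n)\<^sup>2) summable_on UNIV"
    by (rule nonneg_bdd_above_summable_on) (use main in \<open>auto intro!: bdd_aboveI2\<close>)
  moreover have "infsum (\<lambda>n. (R n)\<^sup>2) UNIV \<le> FG\<^sup>2 * H2"
    by (rule infsum_le_finite_sums[OF S]) (use main in auto)
  ultimately show ?thesis unfolding R_def FG_def H2_def by simp
qed



lemma weight_split:
  fixes s :: real and i j k n :: int
  assumes s: "s > 1/2" and n: "n = i + j + k"
  shows "sqrt ((real_of_int n)\<^sup>2 * (1 + (real_of_int n)\<^sup>2) powr (-s))
     \<le> 3 powr s * ((1 + (real_of_int i)\<^sup>2) powr (s/2) + (1 + (real_of_int j)\<^sup>2) powr (s/2)
                    + (1 + (real_of_int k)\<^sup>2) powr (s/2))"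
proof -
  define w where "w = (\<lambda>x::int. 1 + (real_of_int x)\<^sup>2)"
  define m where "m = max (w i) (max (w j) (w k))"
  have w1: "w x \<ge> 1" for x unfolding w_def by simp
  have m1: "m \<ge> 1" unfolding m_def using w1[of i] by simp
  have sq: "(real_of_int n)\<^sup>2 \<le> 3 * ((real_of_int i)\<^sup>2 + (real_of_int j)\<^sup>2 + (real_of_int k)\<^sup>2)"
  proof -
    have "0 \<le> (real_of_int i - real_of_int j)\<^sup>2 + (real_of_int j - real_of_int k)\<^sup>2 + (real_of_int i - real_of_int k)\<^sup>2"
      by simp
    thus ?thesis unfolding n by (simp add: power2_eq_square algebra_simps)
  qed
  have wn: "w n \<le> 9 * m"
  proof -
    have "w i \<le> m" "w j \<le> m" "w k \<le> m" unfolding m_def by auto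
    hence "(real_of_int i)\<^sup>2 + (real_of_int j)\<^sup>2 + (real_of_int k)\<^sup>2 \<le> 3 * m - 3"
      unfolding w_def by linarith
    thus ?thesis using sq unfolding w_def by argo
  qed
  have "(real_of_int n)\<^sup>2 * w n powr (-s) \<le> w n * w n powr (-s)"
    by (rule mult_right_mono) (auto simp: w_def)
  also have "\<dots> = w n powr (1 - s)" using w1[of n] by (simp add: powr_diff powr_minus divide_inverse)
  also have "\<dots> \<le> w n powr s" using w1[of n] s by (intro powr_mono) auto
  also have "\<dots> \<le> (9 * m) powr s" using w1[of n] s wn by (intro powr_mono2) auto
  also have "\<dots> = (3 powr s * m powr (s/2))\<^sup>2"
  proof -
    have a: "3 powr s * 3 powr s = 9 powr s" using powr_mult[of 3 3 s] by simp
    have b: "m powr (s/2) * m powr (s/2) = m powr s" by (simp add: powr_add[symmetric])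
    have "(9 * m) powr s = 9 powr s * m powr s" using m1 by (simp add: powr_mult)
    also have "\<dots> = (3 powr s * m powr (s/2))\<^sup>2" unfolding power2_eq_square a[symmetric] b[symmetric]
      by (simp add: algebra_simps)
    finally show ?thesis .
  qed
  finally have "sqrt ((real_of_int n)\<^sup>2 * w n powr (-s)) \<le> 3 powr s * m powr (s/2)"
    by (simp add: real_le_lsqrt real_sqrt_le_iff real_le_rsqrt)
  also have "m powr (s/2) \<le> w i powr (s/2) + w j powr (s/2) + w k powr (s/2)"
    unfolding m_def by (auto simp: max_def add_nonneg_nonneg)
  finally show ?thesis unfolding w_def by (simp add: mult_left_mono)
qed



lemma tri_bound:
  fixes u :: "int \<Rightarrow> complex"
  assumes as: "(\<lambda>i. cmod (u i)) summable_on UNIV" and bd: "\<And>i. cmod (u i) \<le> Bd"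
  shows "(\<lambda>(i,j). cmod (u i) * cmod (u j) * cmod (u (n-i-j))) summable_on UNIV"
    and "cmod (trilin u n) \<le> infsum (\<lambda>(i,j). cmod (u i) * cmod (u j) * cmod (u (n-i-j))) UNIV"
proof -
  define a where "a = (\<lambda>i. cmod (u i))"
  have P: "(\<lambda>(i,j). a i * a j) summable_on UNIV"
    using prod_summable(1)[of a a] as by (simp add: a_def)
  have Pc: "(\<lambda>(i,j). a i * a j * Bd) summable_on UNIV"
    using summable_on_cmult_left[OF P, of Bd] by (simp add: case_prod_unfold)
  show S1: "(\<lambda>(i,j). cmod (u i) * cmod (u j) * cmod (u (n-i-j))) summable_on UNIV"
    by (rule summable_on_comparison_test[OF Pc])
       (auto simp: a_def intro!: mult_left_mono bd)
  define \<psi> where "\<psi> = (\<lambda>(i::int,j::int). (i, j, n-i-j))"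
  define N where "N = (\<lambda>(x,y,z). cmod (u x) * cmod (u y) * cmod (u z))"
  have inj: "inj_on \<psi> UNIV" unfolding \<psi>_def by (auto simp: inj_on_def)
  have comp: "N \<circ> \<psi> = (\<lambda>(i,j). cmod (u i) * cmod (u j) * cmod (u (n-i-j)))"
    by (auto simp: N_def \<psi>_def fun_eq_iff)
  have NS: "N summable_on range \<psi>"
    by (subst summable_on_reindex[OF inj]) (use S1 comp in simp)
  have sub: "resonant_set n \<subseteq> range \<psi>"
  proof
    fix p assume "p \<in> resonant_set n"
    then obtain x y z where p: "p = (x,y,z)" "x + y + z = n" by (auto simp: resonant_set_def)
    hence "p = \<psi> (x,y)" by (simp add: \<psi>_def)
    thus "p \<in> range \<psi>" by blast
  qed
  have NR: "N summable_on resonant_set n" by (rule summable_on_subset_banach[OF NS sub])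
  define P3 where "P3 = (\<lambda>(x,y,z). u x * u y * u z)"
  have nP: "norm (P3 p) = N p" for p by (cases p) (simp add: P3_def N_def norm_mult)
  have P3S: "P3 summable_on resonant_set n"
    by (rule abs_summable_summable) (use NR nP in simp)
  have "cmod (trilin u n) = norm (infsum P3 (resonant_set n))"
    by (simp add: trilin_def P3_def)
  also have "\<dots> \<le> infsum N (resonant_set n)"
    by (rule norm_infsum_le[OF has_sum_infsum[OF P3S] has_sum_infsum[OF NR]]) (simp add: nP)
  also have "\<dots> \<le> infsum N (range \<psi>)"
    by (rule infsum_mono_neutral[OF NR NS]) (use sub in \<open>auto simp: N_def\<close>)
  also have "\<dots> = infsum (N \<circ> \<psi>) UNIV" by (rule infsum_reindex[OF inj])
  finally show "cmod (trilin u n) \<le> infsum (\<lambda>(i,j). cmod (u i) * cmod (u j) * cmod (u (n-i-j))) UNIV"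
    by (simp add: comp)
qed



definition cst0 :: "real \<Rightarrow> real" where
  "cst0 s = infsum (\<lambda>n::int. (1 + (real_of_int n)\<^sup>2) powr (-s)) UNIV"

lemma l1_bound:
  fixes a :: "int \<Rightarrow> real" and s :: real
  assumes s: "s > 1/2" and a0: "\<And>n. a n \<ge> 0"
    and hsS: "(\<lambda>n. (1 + (real_of_int n)\<^sup>2) powr s * (a n)\<^sup>2) summable_on UNIV"
  shows "a summable_on UNIV \<and>
    infsum a UNIV \<le> (cst0 s + 1) / 2 * sqrt (infsum (\<lambda>n. (1 + (real_of_int n)\<^sup>2) powr s * (a n)\<^sup>2) UNIV)"
proof -
  define w where "w = (\<lambda>n::int. 1 + (real_of_int n)\<^sup>2)"
  define S where "S = infsum (\<lambda>n. w n powr s * (a n)\<^sup>2) UNIV"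
  have w0: "w n > 0" for n unfolding w_def by (simp add: add_pos_nonneg)
  have ws: "(\<lambda>n. w n powr (-s)) summable_on UNIV" using wsum_summable[OF s] by (simp add: w_def)
  have hsS': "(\<lambda>n. w n powr s * (a n)\<^sup>2) summable_on UNIV" using hsS by (simp add: w_def)
  have S0: "S \<ge> 0" unfolding S_def by (rule infsum_nonneg) simp
  have pt: "a n \<le> (l * w n powr (-s) + w n powr s * (a n)\<^sup>2 / l) / 2" if l: "l > 0" for l n
  proof -
    have h1: "w n powr (-s/2) * (w n powr (s/2) * a n) \<le> (l * (w n powr (-s/2))\<^sup>2 + (w n powr (s/2) * a n)\<^sup>2 / l) / 2"
      by (rule amgm[OF l])
    have e1: "w n powr (-s/2) * (w n powr (s/2) * a n) = a n"
      using w0[of n] by (simp add: mult.assoc[symmetric] powr_add[symmetric])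
    have e2: "(w n powr (-s/2))\<^sup>2 = w n powr (-s)"
      using w0[of n] by (simp add: power2_eq_square powr_add[symmetric])
    have e3: "(w n powr (s/2) * a n)\<^sup>2 = w n powr s * (a n)\<^sup>2"
      using w0[of n] by (simp add: power2_eq_square powr_add[symmetric] algebra_simps)
    show ?thesis using h1 unfolding e1 e2 e3 .
  qed
  have cst: "cst0 s = infsum (\<lambda>n. w n powr (-s)) UNIV" by (simp add: cst0_def w_def)
  have hb: "((\<lambda>n. (l * w n powr (-s) + w n powr s * (a n)\<^sup>2 / l) / 2) has_sum ((l * cst0 s + S / l) / 2)) UNIV" for l
    unfolding cst S_def
    by (intro has_sum_divide_const has_sum_add has_sum_cmult_right has_sum_infsum ws hsS')
  have bsum: "(\<lambda>n. (l * w n powr (-s) + w n powr s * (a n)\<^sup>2 / l) / 2) summable_on UNIV" for l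
    using hb[of l] by (rule has_sum_imp_summable)
  have bval: "infsum (\<lambda>n. (l * w n powr (-s) + w n powr s * (a n)\<^sup>2 / l) / 2) UNIV
      = (l * cst0 s + S / l) / 2" for l
    using hb[of l] by (rule infsumI)
  have AS: "a summable_on UNIV"
    by (rule summable_on_comparison_test[OF bsum[of 1]]) (use pt[of 1] a0 in auto)
  have Ab: "infsum a UNIV \<le> (l * cst0 s + S / l) / 2" if "l > 0" for l
    unfolding bval[symmetric] by (rule infsum_mono[OF AS bsum]) (rule pt[OF that])
  show ?thesis
  proof (cases "S = 0")
    case True
    have "a n = 0" for n
    proof -
      have "w n powr s * (a n)\<^sup>2 \<le> S" unfolding S_def by (rule le_infsum_single[OF hsS']) simp
      hence "w n powr s * (a n)\<^sup>2 \<le> 0" using True by simp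
      moreover have "w n powr s > 0" using w0[of n] by simp
      ultimately have "(a n)\<^sup>2 \<le> 0" by (simp add: mult_le_0_iff)
      thus ?thesis by simp
    qed
    hence "a = (\<lambda>_. 0)" by auto
    hence "infsum a UNIV = 0" by simp
    thus ?thesis using AS True by (simp add: S_def w_def)
  next
    case False
    hence "sqrt S > 0" using S0 by simp
    from Ab[OF this] have "infsum a UNIV \<le> (sqrt S * cst0 s + S / sqrt S) / 2" .
    also have "S / sqrt S = sqrt S" using S0 by (simp add: real_div_sqrt)
    finally show ?thesis using AS by (simp add: S_def w_def algebra_simps)
  qed
qed



lemma tri_est:
  fixes u :: "int \<Rightarrow> complex" and s :: real
  assumes s: "s > 1/2" and hsu: "in_Hs s u"
  shows "in_Hs (-s) (\<lambda>n. of_int n * trilin u n) \<and>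
    hs_norm (-s) (\<lambda>n. of_int n * trilin u n) \<le> 3 powr (s+1) * ((cst0 s + 1)/2)\<^sup>2 * (hs_norm s u)^3"
proof -
  define w where "w = (\<lambda>n::int. 1 + (real_of_int n)\<^sup>2)"
  define a where "a = (\<lambda>i. cmod (u i))"
  define S where "S = infsum (\<lambda>n. w n powr s * (a n)\<^sup>2) UNIV"
  define K where "K = (cst0 s + 1)/2"
  define c where "c = 3 powr s * 3"
  have w1: "w n \<ge> 1" for n unfolding w_def by simp
  have w0: "w n > 0" for n using w1[of n] by simp
  have a0: "a n \<ge> 0" for n unfolding a_def by simp
  have hsS: "(\<lambda>n. w n powr s * (a n)\<^sup>2) summable_on UNIV"
    using hsu by (simp add: in_Hs_def hs_weight_def w_def a_def)
  have hnorm: "hs_norm s u = sqrt S" by (simp add: hs_norm_def hs_weight_def S_def w_def a_def)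
  have S0: "S \<ge> 0" unfolding S_def by (rule infsum_nonneg) simp
  from l1_bound[OF s, of a] a0 hsS
  have AS: "a summable_on UNIV" and Ab: "infsum a UNIV \<le> K * sqrt S"
    by (auto simp: K_def S_def w_def)
  have A0: "infsum a UNIV \<ge> 0" by (rule infsum_nonneg) (simp add: a0)
  have wS: "w n powr s * (a n)\<^sup>2 \<le> S" for n unfolding S_def by (rule le_infsum_single[OF hsS]) simp
  have aS: "a n \<le> sqrt S" for n
  proof -
    have "1 \<le> w n powr s" using w1[of n] s by (intro ge_one_powr_ge_zero) auto
    hence "(a n)\<^sup>2 \<le> w n powr s * (a n)\<^sup>2" by (simp add: mult_le_cancel_right1)
    thus ?thesis using wS[of n] a0[of n] by (simp add: real_le_rsqrt)
  qed
  define b where "b = (\<lambda>n. w n powr (s/2) * a n)"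
  have b0: "b n \<ge> 0" for n unfolding b_def using a0 by simp
  have b2: "(b n)\<^sup>2 = w n powr s * (a n)\<^sup>2" for n
    using w0[of n] by (simp add: b_def power2_eq_square powr_add[symmetric] algebra_simps)
  have bS: "(\<lambda>n. (b n)\<^sup>2) summable_on UNIV" using hsS by (simp add: b2)
  have bSv: "infsum (\<lambda>n. (b n)\<^sup>2) UNIV = S" by (simp add: b2 S_def)
  have bb: "b n \<le> sqrt S" for n using wS[of n] b0[of n] by (simp add: b2[symmetric] real_le_rsqrt)
  define R where "R = (\<lambda>n. infsum (\<lambda>(i,j). a i * a j * b (n-i-j)) UNIV)"
  from young[OF a0 a0 b0 AS AS bS]
  have RS: "(\<lambda>n. (R n)\<^sup>2) summable_on UNIV"
    and Rb: "infsum (\<lambda>n. (R n)\<^sup>2) UNIV \<le> (infsum a UNIV * infsum a UNIV)\<^sup>2 * S"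
    by (auto simp: R_def bSv)
  have P: "(\<lambda>(i,j). a i * a j) summable_on UNIV"
    using prod_summable(1)[OF a0 a0 AS AS] .
  have Pc: "(\<lambda>(i,j). a i * a j * sqrt S) summable_on UNIV"
    using summable_on_cmult_left[OF P, of "sqrt S"] by (simp add: case_prod_unfold)
  have phi3: "(\<lambda>(i,j). a i * a j * b (n-i-j)) summable_on UNIV" for n
    by (rule summable_on_comparison_test[OF Pc])
       (auto intro!: mult_left_mono bb mult_nonneg_nonneg a0 b0)
  have perm: "infsum (\<lambda>(i,j). b i * a j * a (n-i-j)) UNIV = R n
           \<and> (\<lambda>(i,j). b i * a j * a (n-i-j)) summable_on UNIV
           \<and> infsum (\<lambda>(i,j). a i * b j * a (n-i-j)) UNIV = R n
           \<and> (\<lambda>(i,j). a i * b j * a (n-i-j)) summable_on UNIV" for n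
  proof -
    define \<sigma> where "\<sigma> = (\<lambda>(i::int,j::int). (n-i-j, j))"
    define \<tau> where "\<tau> = (\<lambda>(i::int,j::int). (i, n-i-j))"
    have bs: "bij_betw \<sigma> UNIV UNIV" by (rule bij_betwI[where g=\<sigma>]) (auto simp: \<sigma>_def)
    have bt: "bij_betw \<tau> UNIV UNIV" by (rule bij_betwI[where g=\<tau>]) (auto simp: \<tau>_def)
    have e1: "(\<lambda>(i,j). b i * a j * a (n-i-j)) = (\<lambda>p. (\<lambda>(i,j). a i * a j * b (n-i-j)) (\<sigma> p))"
      by (auto simp: \<sigma>_def fun_eq_iff algebra_simps)
    have e2: "(\<lambda>(i,j). a i * b j * a (n-i-j)) = (\<lambda>p. (\<lambda>(i,j). a i * a j * b (n-i-j)) (\<tau> p))"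
      by (auto simp: \<tau>_def fun_eq_iff algebra_simps)
    show ?thesis unfolding e1 e2 R_def
      using infsum_reindex_bij_betw[OF bs, where f="\<lambda>(i,j). a i * a j * b (n-i-j)"]
        infsum_reindex_bij_betw[OF bt, where f="\<lambda>(i,j). a i * a j * b (n-i-j)"]
        summable_on_reindex_bij_betw[OF bs, where f="\<lambda>(i,j). a i * a j * b (n-i-j)"]
        summable_on_reindex_bij_betw[OF bt, where f="\<lambda>(i,j). a i * a j * b (n-i-j)"] phi3[of n]
      by simp
  qed
  have key: "sqrt ((real_of_int n)\<^sup>2 * w n powr (-s)) * infsum (\<lambda>(i,j). a i * a j * a (n-i-j)) UNIV
      \<le> c * R n" for n
  proof -
    define V where "V = sqrt ((real_of_int n)\<^sup>2 * w n powr (-s))"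
    have DS: "(\<lambda>(i,j). a i * a j * a (n-i-j)) summable_on UNIV"
      using tri_bound(1)[of u "sqrt S" n] AS aS by (simp add: a_def)
    have "V * infsum (\<lambda>(i,j). a i * a j * a (n-i-j)) UNIV = infsum (\<lambda>(i,j). V * (a i * a j * a (n-i-j))) UNIV"
      using infsum_cmult_right[OF DS, of V] by (simp add: case_prod_unfold)
    also have "\<dots> \<le> infsum (\<lambda>(i,j). 3 powr s * (b i * a j * a (n-i-j) + a i * b j * a (n-i-j) + a i * a j * b (n-i-j))) UNIV"
    proof (rule infsum_mono)
      show "(\<lambda>(i,j). V * (a i * a j * a (n-i-j))) summable_on UNIV"
        using summable_on_cmult_right[OF DS, of V] by (simp add: case_prod_unfold)
      have "(\<lambda>p. (\<lambda>(i,j). b i * a j * a (n-i-j)) p + (\<lambda>(i,j). a i * b j * a (n-i-j)) p + (\<lambda>(i,j). a i * a j * b (n-i-j)) p) summable_on UNIV"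
        using perm[of n] phi3[of n] by (intro summable_on_add) auto
      from summable_on_cmult_right[OF this, of "3 powr s"]
      show "(\<lambda>(i,j). 3 powr s * (b i * a j * a (n-i-j) + a i * b j * a (n-i-j) + a i * a j * b (n-i-j))) summable_on UNIV"
        by (simp add: case_prod_unfold)
      fix p :: "int \<times> int"
      obtain i j where p: "p = (i,j)" by (cases p)
      have "V \<le> 3 powr s * (w i powr (s/2) + w j powr (s/2) + w (n-i-j) powr (s/2))"
        unfolding V_def w_def by (rule weight_split[OF s]) simp
      hence "V * (a i * a j * a (n-i-j)) \<le> 3 powr s * (w i powr (s/2) + w j powr (s/2) + w (n-i-j) powr (s/2)) * (a i * a j * a (n-i-j))"
        by (rule mult_right_mono) (simp add: a0)
      thus "(\<lambda>(i,j). V * (a i * a j * a (n-i-j))) p \<le> (\<lambda>(i,j). 3 powr s * (b i * a j * a (n-i-j) + a i * b j * a (n-i-j) + a i * a j * b (n-i-j))) p"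
        by (simp add: p b_def algebra_simps)
    qed
    also have "\<dots> = 3 powr s * (infsum (\<lambda>(i,j). b i * a j * a (n-i-j)) UNIV + infsum (\<lambda>(i,j). a i * b j * a (n-i-j)) UNIV + infsum (\<lambda>(i,j). a i * a j * b (n-i-j)) UNIV)"
    proof -
      have s1: "(\<lambda>(i,j). b i * a j * a (n-i-j)) summable_on UNIV" "(\<lambda>(i,j). a i * b j * a (n-i-j)) summable_on UNIV"
        using perm[of n] by auto
      have "infsum (\<lambda>(i,j). 3 powr s * (b i * a j * a (n-i-j) + a i * b j * a (n-i-j) + a i * a j * b (n-i-j))) UNIV
         = infsum (\<lambda>p. 3 powr s * ((\<lambda>(i,j). b i * a j * a (n-i-j)) p + (\<lambda>(i,j). a i * b j * a (n-i-j)) p + (\<lambda>(i,j). a i * a j * b (n-i-j)) p)) UNIV"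
        by (simp add: case_prod_unfold)
      also have "\<dots> = 3 powr s * infsum (\<lambda>p. (\<lambda>(i,j). b i * a j * a (n-i-j)) p + (\<lambda>(i,j). a i * b j * a (n-i-j)) p + (\<lambda>(i,j). a i * a j * b (n-i-j)) p) UNIV"
        by (rule infsum_cmult_right) (use s1 phi3[of n] in \<open>intro summable_on_add\<close>)
      also have "\<dots> = 3 powr s * (infsum (\<lambda>(i,j). b i * a j * a (n-i-j)) UNIV + infsum (\<lambda>(i,j). a i * b j * a (n-i-j)) UNIV + infsum (\<lambda>(i,j). a i * a j * b (n-i-j)) UNIV)"
        using s1 phi3[of n] by (simp add: infsum_add summable_on_add)
      finally show ?thesis .
    qed
    also have "\<dots> = c * R n" using perm[of n] by (simp add: R_def c_def)
    finally show ?thesis unfolding V_def .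
  qed
  have c0: "c \<ge> 0" unfolding c_def by simp
  have pt: "hs_weight (-s) n * (cmod (of_int n * trilin u n))\<^sup>2 \<le> c\<^sup>2 * (R n)\<^sup>2" for n
  proof -
    define V2 where "V2 = (real_of_int n)\<^sup>2 * w n powr (-s)"
    define D where "D = infsum (\<lambda>(i,j). a i * a j * a (n-i-j)) UNIV"
    have V20: "V2 \<ge> 0" unfolding V2_def by simp
    have tb: "cmod (trilin u n) \<le> D"
      using tri_bound(2)[of u "sqrt S" n] AS aS by (simp add: a_def D_def)
    have "hs_weight (-s) n * (cmod (of_int n * trilin u n))\<^sup>2 = V2 * (cmod (trilin u n))\<^sup>2"
      by (simp add: hs_weight_def V2_def w_def norm_mult power_mult_distrib)
    also have "\<dots> \<le> V2 * D\<^sup>2"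
      by (rule mult_left_mono[OF power_mono[OF tb] V20]) simp
    also have "\<dots> = (sqrt V2 * D)\<^sup>2" using V20 by (simp add: power_mult_distrib)
    also have "\<dots> \<le> (c * R n)\<^sup>2"
    proof (rule power_mono)
      show "sqrt V2 * D \<le> c * R n" using key[of n] by (simp add: V2_def D_def)
      have "0 \<le> cmod (trilin u n)" by simp
      hence "0 \<le> D" using tb by linarith
      thus "0 \<le> sqrt V2 * D" using V20 by simp
    qed
    finally show ?thesis by (simp add: power_mult_distrib)
  qed
  have nn: "0 \<le> hs_weight (-s) n * (cmod (of_int n * trilin u n))\<^sup>2" for n
    by (simp add: hs_weight_def)
  have cR: "(\<lambda>n. c\<^sup>2 * (R n)\<^sup>2) summable_on UNIV" by (rule summable_on_cmult_right[OF RS])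
  have TS: "(\<lambda>n. hs_weight (-s) n * (cmod (of_int n * trilin u n))\<^sup>2) summable_on UNIV"
    by (rule summable_on_comparison_test[OF cR]) (use pt nn in auto)
  have "infsum (\<lambda>n. hs_weight (-s) n * (cmod (of_int n * trilin u n))\<^sup>2) UNIV \<le> infsum (\<lambda>n. c\<^sup>2 * (R n)\<^sup>2) UNIV"
    by (rule infsum_mono[OF TS cR pt])
  also have "\<dots> = c\<^sup>2 * infsum (\<lambda>n. (R n)\<^sup>2) UNIV" by (rule infsum_cmult_right) (use RS in simp)
  also have "\<dots> \<le> c\<^sup>2 * ((infsum a UNIV * infsum a UNIV)\<^sup>2 * S)" by (rule mult_left_mono[OF Rb]) simp
  also have "\<dots> \<le> c\<^sup>2 * (((K * sqrt S) * (K * sqrt S))\<^sup>2 * S)"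
    using A0 Ab by (intro mult_left_mono mult_right_mono power_mono mult_mono Ab A0 S0) auto
  also have "\<dots> = (c * K\<^sup>2 * (sqrt S)^3)\<^sup>2" using S0
    by (simp add: power2_eq_square power3_eq_cube)
  finally have "hs_norm (-s) (\<lambda>n. of_int n * trilin u n) \<le> c * K\<^sup>2 * (sqrt S)^3"
    unfolding hs_norm_def using c0 S0 by (simp add: real_sqrt_le_iff real_le_lsqrt)
  moreover have "c = 3 powr (s+1)" unfolding c_def by (simp add: powr_add)
  ultimately show ?thesis using TS by (simp add: in_Hs_def hnorm K_def)
qed



lemma pow3_powr: "(w::real) > 0 \<Longrightarrow> (w powr x)^3 = w powr (3 * x)"
  by (simp add: power3_eq_cube powr_add[symmetric])

lemma first_est:
  fixes u u0 :: "int \<Rightarrow> complex" and s M :: real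
  assumes s: "s > 1/2" and hu: "in_Hs s u" and hu0: "in_Hs s u0"
    and Mu: "hs_norm s u \<le> M" and Mu0: "hs_norm s u0 \<le> M"
  shows "in_Hs (-s) (\<lambda>n. of_int n * complex_of_real ((cmod (u n))\<^sup>2 - (cmod (u0 n))\<^sup>2) * u n) \<and>
    hs_norm (-s) (\<lambda>n. of_int n * complex_of_real ((cmod (u n))\<^sup>2 - (cmod (u0 n))\<^sup>2) * u n) \<le> M^3"
proof -
  define w where "w = (\<lambda>n::int. 1 + (real_of_int n)\<^sup>2)"
  define S where "S = infsum (\<lambda>n. w n powr s * (cmod (u n))\<^sup>2) UNIV"
  define S' where "S' = infsum (\<lambda>n. w n powr s * (cmod (u0 n))\<^sup>2) UNIV"
  have w1: "w n \<ge> 1" for n unfolding w_def by simp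
  have w0: "w n > 0" for n using w1[of n] by simp
  have hsS: "(\<lambda>n. w n powr s * (cmod (u n))\<^sup>2) summable_on UNIV"
    using hu by (simp add: in_Hs_def hs_weight_def w_def)
  have hsS': "(\<lambda>n. w n powr s * (cmod (u0 n))\<^sup>2) summable_on UNIV"
    using hu0 by (simp add: in_Hs_def hs_weight_def w_def)
  have S0: "S \<ge> 0" unfolding S_def by (rule infsum_nonneg) simp
  have S'0: "S' \<ge> 0" unfolding S'_def by (rule infsum_nonneg) simp
  have hnS: "hs_norm s u = sqrt S" by (simp add: hs_norm_def S_def w_def hs_weight_def)
  have hnS': "hs_norm s u0 = sqrt S'" by (simp add: hs_norm_def S'_def w_def hs_weight_def)
  have hn0: "hs_norm s u \<ge> 0" using hnS S0 by simp
  have M0: "M \<ge> 0" using Mu hn0 by linarith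
  have SM: "S \<le> M\<^sup>2" proof -
    have "(sqrt S)\<^sup>2 \<le> M\<^sup>2" using Mu hnS S0 by (intro power_mono) auto
    thus ?thesis using S0 by simp
  qed
  have S'M: "S' \<le> M\<^sup>2" proof -
    have "(sqrt S')\<^sup>2 \<le> M\<^sup>2" using Mu0 hnS' S'0 by (intro power_mono) auto
    thus ?thesis using S'0 by simp
  qed
  define E where "E = (\<lambda>n. of_int n * complex_of_real ((cmod (u n))\<^sup>2 - (cmod (u0 n))\<^sup>2) * u n)"
  have pt: "hs_weight (-s) n * (cmod (E n))\<^sup>2 \<le> M^4 * (w n powr s * (cmod (u n))\<^sup>2)" for n
  proof -
    define X where "X = w n powr (-s)"
    have X0: "X > 0" unfolding X_def using w0[of n] by simp
    have WX: "w n powr s * X = 1" unfolding X_def using w0[of n] by (simp add: powr_add[symmetric])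
    have p1: "w n powr s * (cmod (u n))\<^sup>2 \<le> M\<^sup>2"
      using le_infsum_single[OF hsS, of n] SM by (simp add: S_def)
    have p2: "w n powr s * (cmod (u0 n))\<^sup>2 \<le> M\<^sup>2"
      using le_infsum_single[OF hsS', of n] S'M by (simp add: S'_def)
    have q1: "(cmod (u n))\<^sup>2 \<le> X * M\<^sup>2"
    proof -
      have "X * (w n powr s * (cmod (u n))\<^sup>2) \<le> X * M\<^sup>2" using p1 X0 by simp
      thus ?thesis using WX by (simp add: mult.assoc[symmetric] mult.commute)
    qed
    have q2: "(cmod (u0 n))\<^sup>2 \<le> X * M\<^sup>2"
    proof -
      have "X * (w n powr s * (cmod (u0 n))\<^sup>2) \<le> X * M\<^sup>2" using p2 X0 by simp
      thus ?thesis using WX by (simp add: mult.assoc[symmetric] mult.commute)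
    qed
    define d where "d = (cmod (u n))\<^sup>2 - (cmod (u0 n))\<^sup>2"
    have "0 \<le> (cmod (u n))\<^sup>2" "0 \<le> (cmod (u0 n))\<^sup>2" by simp_all
    hence "\<bar>d\<bar> \<le> X * M\<^sup>2" using q1 q2 unfolding d_def abs_le_iff by linarith
    hence d2: "d\<^sup>2 \<le> (X * M\<^sup>2)\<^sup>2" using power_mono[of "\<bar>d\<bar>" "X * M\<^sup>2" 2] by simp
    have n2: "(real_of_int n)\<^sup>2 \<le> w n" unfolding w_def by simp
    have X3: "X^3 * w n \<le> w n powr s"
    proof -
      have "X^3 = w n powr (3 * (-s))" unfolding X_def by (rule pow3_powr[OF w0[of n]])
      hence "X^3 * w n = w n powr (3 * (-s)) * w n powr 1" using w0[of n] by simp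
      also have "\<dots> = w n powr (3 * (-s) + 1)" by (rule powr_add[symmetric])
      also have "\<dots> = w n powr (1 - 3 * s)" by (simp add: algebra_simps)
      finally have "X^3 * w n = w n powr (1 - 3 * s)" .
      also have "\<dots> \<le> w n powr s" using w1[of n] s by (intro powr_mono) auto
      finally show ?thesis .
    qed
    have hwX: "hs_weight (-s) n = X" by (simp add: hs_weight_def X_def w_def)
    have "E n = of_int n * complex_of_real d * u n" by (simp only: E_def d_def)
    hence "cmod (E n) = \<bar>real_of_int n\<bar> * \<bar>d\<bar> * cmod (u n)" by (simp only: norm_mult norm_of_real norm_of_int)
    hence "(cmod (E n))\<^sup>2 = (real_of_int n)\<^sup>2 * d\<^sup>2 * (cmod (u n))\<^sup>2" by (simp add: power_mult_distrib)
    hence "hs_weight (-s) n * (cmod (E n))\<^sup>2 = X * (real_of_int n)\<^sup>2 * d\<^sup>2 * (cmod (u n))\<^sup>2"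
      by (simp add: hwX)
    also have "\<dots> \<le> X * (real_of_int n)\<^sup>2 * (X * M\<^sup>2)\<^sup>2 * (cmod (u n))\<^sup>2"
      using d2 X0 by (intro mult_right_mono mult_left_mono) auto
    also have "\<dots> = M^4 * ((X^3 * (real_of_int n)\<^sup>2) * (cmod (u n))\<^sup>2)"
      by (simp add: power2_eq_square power3_eq_cube power4_eq_xxxx)
    also have "\<dots> \<le> M^4 * ((X^3 * w n) * (cmod (u n))\<^sup>2)"
      using n2 X0 by (intro mult_left_mono mult_right_mono) auto
    also have "\<dots> \<le> M^4 * (w n powr s * (cmod (u n))\<^sup>2)"
      using X3 by (intro mult_left_mono mult_right_mono) auto
    finally show ?thesis .
  qed
  have nn: "0 \<le> hs_weight (-s) n * (cmod (E n))\<^sup>2" for n by (simp add: hs_weight_def)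
  have cR: "(\<lambda>n. M^4 * (w n powr s * (cmod (u n))\<^sup>2)) summable_on UNIV"
    by (rule summable_on_cmult_right[OF hsS])
  have TS: "(\<lambda>n. hs_weight (-s) n * (cmod (E n))\<^sup>2) summable_on UNIV"
    by (rule summable_on_comparison_test[OF cR]) (use pt nn in auto)
  have "infsum (\<lambda>n. hs_weight (-s) n * (cmod (E n))\<^sup>2) UNIV \<le> infsum (\<lambda>n. M^4 * (w n powr s * (cmod (u n))\<^sup>2)) UNIV"
    by (rule infsum_mono[OF TS cR pt])
  also have "\<dots> = M^4 * S" unfolding S_def by (rule infsum_cmult_right) (use hsS in simp)
  also have "\<dots> \<le> M^4 * M\<^sup>2" using SM by (intro mult_left_mono) auto
  also have "\<dots> = (M^3)\<^sup>2" by (simp add: power2_eq_square power3_eq_cube power4_eq_xxxx)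
  finally have "hs_norm (-s) E \<le> M^3"
    unfolding hs_norm_def using M0 by (simp add: real_sqrt_le_iff real_le_lsqrt)
  thus ?thesis using TS by (simp add: in_Hs_def E_def)
qed



lemma hs_weight_nonneg: "hs_weight s n \<ge> 0" by (simp add: hs_weight_def)

lemma hs_norm_sq: "(hs_norm s x)\<^sup>2 = infsum (\<lambda>n. hs_weight s n * (cmod (x n))\<^sup>2) UNIV"
  unfolding hs_norm_def by (rule real_sqrt_pow2) (rule infsum_nonneg, simp add: hs_weight_nonneg)

lemma hs_norm_nonneg: "hs_norm s x \<ge> 0"
  unfolding hs_norm_def by (rule real_sqrt_ge_zero) (rule infsum_nonneg, simp add: hs_weight_nonneg)

lemma hs_sq:
  assumes hx: "in_Hs s x" and hy: "in_Hs s y"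
  shows "(hs_norm s x)\<^sup>2 \<le> 2 * (hs_norm s (\<lambda>n. x n - y n))\<^sup>2 + 2 * (hs_norm s y)\<^sup>2"
proof -
  define fx where "fx = (\<lambda>n. hs_weight s n * (cmod (x n))\<^sup>2)"
  define fy where "fy = (\<lambda>n. hs_weight s n * (cmod (y n))\<^sup>2)"
  define fd where "fd = (\<lambda>n. hs_weight s n * (cmod (x n - y n))\<^sup>2)"
  have sx: "fx summable_on UNIV" using hx by (simp add: in_Hs_def fx_def)
  have sy: "fy summable_on UNIV" using hy by (simp add: in_Hs_def fy_def)
  have sq2: "(p + q)\<^sup>2 \<le> 2 * p\<^sup>2 + 2 * q\<^sup>2" for p q :: real
  proof -
    have "0 \<le> (p - q)\<^sup>2" by simp
    thus ?thesis by (simp add: power2_eq_square algebra_simps)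
  qed
  have pd: "fd n \<le> 2 * fx n + 2 * fy n" for n
  proof -
    have "cmod (x n - y n) \<le> cmod (x n) + cmod (y n)" by (rule norm_triangle_ineq4)
    hence "(cmod (x n - y n))\<^sup>2 \<le> (cmod (x n) + cmod (y n))\<^sup>2" by (intro power_mono) auto
    also have "\<dots> \<le> 2 * (cmod (x n))\<^sup>2 + 2 * (cmod (y n))\<^sup>2" by (rule sq2)
    finally show ?thesis unfolding fd_def fx_def fy_def using hs_weight_nonneg[of s n]
      by (metis (no_types, lifting) distrib_left mult.left_commute mult_left_mono)
  qed
  have px: "fx n \<le> 2 * fd n + 2 * fy n" for n
  proof -
    have "cmod (x n) \<le> cmod (x n - y n) + cmod (y n)" using norm_triangle_ineq[of "x n - y n" "y n"] by simp
    hence "(cmod (x n))\<^sup>2 \<le> (cmod (x n - y n) + cmod (y n))\<^sup>2" by (intro power_mono) auto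
    also have "\<dots> \<le> 2 * (cmod (x n - y n))\<^sup>2 + 2 * (cmod (y n))\<^sup>2" by (rule sq2)
    finally show ?thesis unfolding fd_def fx_def fy_def using hs_weight_nonneg[of s n]
      by (metis (no_types, lifting) distrib_left mult.left_commute mult_left_mono)
  qed
  have s2: "(\<lambda>n. 2 * fx n + 2 * fy n) summable_on UNIV"
    by (intro summable_on_add summable_on_cmult_right sx sy)
  have sd: "fd summable_on UNIV"
    by (rule summable_on_comparison_test[OF s2 pd]) (simp add: fd_def hs_weight_nonneg)
  have "infsum fx UNIV \<le> infsum (\<lambda>n. 2 * fd n + 2 * fy n) UNIV"
    by (rule infsum_mono[OF sx _ px]) (intro summable_on_add summable_on_cmult_right sd sy)
  also have "\<dots> = 2 * infsum fd UNIV + 2 * infsum fy UNIV"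
    by (simp add: infsum_add summable_on_cmult_right sd sy infsum_cmult_right)
  finally show ?thesis by (simp add: hs_norm_sq fx_def fy_def fd_def)
qed

lemma hs_bdd:
  assumes c: "cont_Hs s T v"
  shows "bdd_above ((\<lambda>\<tau>. hs_norm s (v \<tau>)) ` {0..T})"
proof -
  have inH: "\<And>t. t \<in> {0..T} \<Longrightarrow> in_Hs s (v t)" using c by (simp add: cont_Hs_def)
  have lim: "\<And>t0. t0 \<in> {0..T} \<Longrightarrow> ((\<lambda>t. hs_norm s (\<lambda>n. v t n - v t0 n)) \<longlongrightarrow> 0) (at t0 within {0..T})"
    using c by (simp add: cont_Hs_def)
  have loc: "\<exists>d>0. \<forall>t\<in>{0..T}. dist t t0 < d \<longrightarrow> (hs_norm s (v t))\<^sup>2 \<le> 2 + 2 * (hs_norm s (v t0))\<^sup>2"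
    if t0: "t0 \<in> {0..T}" for t0
  proof -
    have "eventually (\<lambda>t. hs_norm s (\<lambda>n. v t n - v t0 n) < 1) (at t0 within {0..T})"
      using order_tendstoD(2)[OF lim[OF t0], of 1] by simp
    then obtain d where d: "d > 0" "\<And>t. t \<in> {0..T} \<Longrightarrow> t \<noteq> t0 \<Longrightarrow> dist t t0 < d \<Longrightarrow> hs_norm s (\<lambda>n. v t n - v t0 n) < 1"
      unfolding eventually_at by blast
    have "(hs_norm s (v t))\<^sup>2 \<le> 2 + 2 * (hs_norm s (v t0))\<^sup>2" if t: "t \<in> {0..T}" "dist t t0 < d" for t
    proof (cases "t = t0")
      case True
      then show ?thesis by simp
    next
      case False
      have h1: "hs_norm s (\<lambda>n. v t n - v t0 n) < 1" using d(2)[OF t(1) False t(2)] .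
      have h0: "hs_norm s (\<lambda>n. v t n - v t0 n) \<ge> 0" by (rule hs_norm_nonneg)
      have "(hs_norm s (\<lambda>n. v t n - v t0 n))\<^sup>2 \<le> 1"
        using h0 h1 by (simp add: abs_square_le_1)
      thus ?thesis using hs_sq[OF inH[OF t(1)] inH[OF t0]] by linarith
    qed
    thus ?thesis using d(1) by blast
  qed
  then obtain d where d: "\<And>t0. t0 \<in> {0..T} \<Longrightarrow> d t0 > 0 \<and> (\<forall>t\<in>{0..T}. dist t t0 < d t0 \<longrightarrow> (hs_norm s (v t))\<^sup>2 \<le> 2 + 2 * (hs_norm s (v t0))\<^sup>2)"
    by metis
  have cov: "{0..T} \<subseteq> (\<Union>c\<in>{0..T}. ball c (d c))"
    using d by force
  obtain C' where C': "C' \<subseteq> {0..T}" "finite C'" "{0..T} \<subseteq> (\<Union>c\<in>C'. ball c (d c))"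
    using compactE_image[OF compact_Icc[of 0 T], where C="{0..T}" and f="\<lambda>c. ball c (d c)"] cov by auto
  define B where "B = Max (insert 0 ((\<lambda>t0. 2 + 2 * (hs_norm s (v t0))\<^sup>2) ` C'))"
  have "hs_norm s (v t) \<le> sqrt B" if t: "t \<in> {0..T}" for t
  proof -
    obtain c where c: "c \<in> C'" "t \<in> ball c (d c)" using C'(3) t by blast
    have "dist t c < d c" using c(2) by (simp add: dist_commute)
    hence "(hs_norm s (v t))\<^sup>2 \<le> 2 + 2 * (hs_norm s (v c))\<^sup>2" using d[of c] c(1) C'(1) t by auto
    also have "\<dots> \<le> B" unfolding B_def using C'(2) c(1) by (intro Max_ge) auto
    finally have "(hs_norm s (v t))\<^sup>2 \<le> B" .
    thus ?thesis by (simp add: real_le_rsqrt)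
  qed
  thus ?thesis by (intro bdd_aboveI2) 
qed


theorem lemma6p1:
  fixes s :: real
  assumes "s > 1/2"
  shows "\<exists>C>0. \<forall>(\<beta>::real) (\<gamma>::real) (\<mu>::real) (T::real) (v :: real \<Rightarrow> int \<Rightarrow> complex).
     \<beta> \<ge> 0 \<and> (\<mu> = 1 \<or> \<mu> = -1) \<and> T > 0 \<and>
     cont_Hs s T v \<and> (\<forall>t\<in>{0..T}. real_valued_coeffs (v t)) \<and> solves_eq \<beta> \<gamma> \<mu> T v
     \<longrightarrow>
     (\<forall>t\<in>{0..T}.
        in_Hs (-s) (\<lambda>n. of_int n * complex_of_real ((cmod (v t n))\<^sup>2 - (cmod (v 0 n))\<^sup>2) * v t n) \<and>
        hs_norm (-s) (\<lambda>n. of_int n * complex_of_real ((cmod (v t n))\<^sup>2 - (cmod (v 0 n))\<^sup>2) * v t n)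
          \<le> C * (SUP \<tau>\<in>{0..T}. hs_norm s (v \<tau>)) ^ 3 \<and>
        in_Hs (-s) (\<lambda>n. of_int n * trilin (v t) n) \<and>
        hs_norm (-s) (\<lambda>n. of_int n * trilin (v t) n)
          \<le> C * (SUP \<tau>\<in>{0..T}. hs_norm s (v \<tau>)) ^ 3)"
proof -
  have s: "s > 1/2" using assms .
  define K where "K = 3 powr (s+1) * ((cst0 s + 1)/2)\<^sup>2"
  have K0: "K \<ge> 0" unfolding K_def by simp
  show ?thesis
  proof (intro exI[of _ "1 + K"] conjI allI impI ballI)
    show "1 + K > 0" using K0 by simp
    fix \<beta> \<gamma> \<mu> T :: real and v :: "real \<Rightarrow> int \<Rightarrow> complex" and t :: real
    assume H: "\<beta> \<ge> 0 \<and> (\<mu> = 1 \<or> \<mu> = -1) \<and> T > 0 \<and>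
     cont_Hs s T v \<and> (\<forall>t\<in>{0..T}. real_valued_coeffs (v t)) \<and> solves_eq \<beta> \<gamma> \<mu> T v"
    assume t: "t \<in> {0..T}"
    have T0: "T > 0" and c: "cont_Hs s T v" using H by auto
    have inH: "\<And>t. t \<in> {0..T} \<Longrightarrow> in_Hs s (v t)" using c by (simp add: cont_Hs_def)
    define M where "M = (SUP \<tau>\<in>{0..T}. hs_norm s (v \<tau>))"
    have bdd: "bdd_above ((\<lambda>\<tau>. hs_norm s (v \<tau>)) ` {0..T})" by (rule hs_bdd[OF c])
    have leM: "hs_norm s (v \<tau>) \<le> M" if "\<tau> \<in> {0..T}" for \<tau>
      unfolding M_def by (rule cSUP_upper[OF that bdd])
    have z: "0 \<in> {0..T}" using T0 by simp
    have M0: "M \<ge> 0" using leM[OF z] hs_norm_nonneg[of s "v 0"] by linarith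
    have M3: "M^3 \<ge> 0" using M0 by simp
    from first_est[OF s inH[OF t] inH[OF z] leM[OF t] leM[OF z]]
    have F1: "in_Hs (-s) (\<lambda>n. of_int n * complex_of_real ((cmod (v t n))\<^sup>2 - (cmod (v 0 n))\<^sup>2) * v t n)"
      and F2: "hs_norm (-s) (\<lambda>n. of_int n * complex_of_real ((cmod (v t n))\<^sup>2 - (cmod (v 0 n))\<^sup>2) * v t n) \<le> M^3"
      by blast+
    from tri_est[OF s inH[OF t]]
    have T1: "in_Hs (-s) (\<lambda>n. of_int n * trilin (v t) n)"
      and T2: "hs_norm (-s) (\<lambda>n. of_int n * trilin (v t) n) \<le> K * (hs_norm s (v t))^3"
      by (auto simp: K_def)
    have "K * (hs_norm s (v t))^3 \<le> K * M^3"
      using leM[OF t] hs_norm_nonneg[of s "v t"] K0 by (intro mult_left_mono power_mono) auto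
    also have "\<dots> \<le> (1 + K) * M^3" using M3 by (simp add: distrib_right)
    finally have T3: "hs_norm (-s) (\<lambda>n. of_int n * trilin (v t) n) \<le> (1 + K) * M^3" using T2 by linarith
    have F3: "hs_norm (-s) (\<lambda>n. of_int n * complex_of_real ((cmod (v t n))\<^sup>2 - (cmod (v 0 n))\<^sup>2) * v t n) \<le> (1 + K) * M^3"
    proof -
      have "M^3 \<le> (1 + K) * M^3" using K0 M3 by (simp add: distrib_right)
      thus ?thesis using F2 by linarith
    qed
    show "in_Hs (-s) (\<lambda>n. of_int n * complex_of_real ((cmod (v t n))\<^sup>2 - (cmod (v 0 n))\<^sup>2) * v t n)" by (rule F1)
    show "hs_norm (-s) (\<lambda>n. of_int n * complex_of_real ((cmod (v t n))\<^sup>2 - (cmod (v 0 n))\<^sup>2) * v t n)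
          \<le> (1 + K) * (SUP \<tau>\<in>{0..T}. hs_norm s (v \<tau>)) ^ 3" using F3 by (simp add: M_def)
    show "in_Hs (-s) (\<lambda>n. of_int n * trilin (v t) n)" by (rule T1)
    show "hs_norm (-s) (\<lambda>n. of_int n * trilin (v t) n) \<le> (1 + K) * (SUP \<tau>\<in>{0..T}. hs_norm s (v \<tau>)) ^ 3"
      using T3 by (simp add: M_def)
  qed
qed

end
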